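(* Let $f(z)=\frac{az+b}{cz+d}$ be a Möbius transformation, and put $r=f(\zeta)$, $s=f(\xi)$. Let $G(r,s)$ be a $\mathbb C^2$-valued holomorphic function satisfying $$G_{rs}=\frac1{2(r-s)}(G_r-G_s).$$ Let $\lambda(\zeta,\xi)$ satisfy $\lambda^2=\dfrac{r-s}{f'(\zeta)(\zeta-\xi)}$ (equivalently $\lambda^{-2}=\dfrac{r-s}{f'(\xi)(\zeta-\xi)}$). Then $\alpha'=\lambda G_\zeta$ and $\beta'=\lambda^{-1}G_\xi$ satisfy $\alpha'_\xi=\frac1{2(\zeta-\xi)}(\alpha'-\beta')=\beta'_\zeta$; consequently there is locally a function $F(\zeta,\xi)$ with $F_\zeta=\alpha'$, $F_\xi=\beta'$, which satisfies $$F_{\zeta\xi}=\frac1{2(\zeta-\xi)}(F_\zeta-F_\xi),$$ and $$dr\,ds+H_{G_r,G_s}=f'(\zeta)f'(\xi)\bigl(d\zeta\,d\xi+H_{F_\zeta,F_\xi}\bigr).$$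
   Context: For $A=(A_1,A_2),B=(B_1,B_2)\in\mathbb C^2$ (possibly depending on the base coordinates) and fibre coordinates $(u_1,u_2)$, $$H_{A,B}=\frac{(A_2\,du_1-A_1\,du_2)(B_2\,du_1-B_1\,du_2)}{(A_2B_1-A_1B_2)^2}.$$ Subscripts denote partial derivatives; $G_\zeta=\partial_\zeta(G(f(\zeta),f(\xi)))$ etc. *)

theory Defs
  imports "HOL-Analysis.Analysis"
begin

definition moebius :: "complex \<Rightarrow> complex \<Rightarrow> complex \<Rightarrow> complex \<Rightarrow> complex \<Rightarrow> complex" where
  "moebius a b c d z = (a * z + b) / (c * z + d)"

definition holo2 :: "(complex \<times> complex \<Rightarrow> complex) \<Rightarrow> (complex \<times> complex) set \<Rightarrow> bool" where
  "holo2 g V \<longleftrightarrow> (\<forall>p\<in>V. \<exists>A B. (g has_derivative (\<lambda>h. A * fst h + B * snd h)) (at p))"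

definition holoC2 :: "(complex \<times> complex \<Rightarrow> complex \<times> complex) \<Rightarrow> (complex \<times> complex) set \<Rightarrow> bool" where
  "holoC2 G V \<longleftrightarrow> holo2 (\<lambda>p. fst (G p)) V \<and> holo2 (\<lambda>p. snd (G p)) V"

definition csc :: "complex \<Rightarrow> complex \<times> complex \<Rightarrow> complex \<times> complex" where
  "csc c v = (c * fst v, c * snd v)"

definition pd1 :: "(complex \<times> complex \<Rightarrow> complex \<times> complex) \<Rightarrow> complex \<times> complex \<Rightarrow> complex \<times> complex" where
  "pd1 G p = (deriv (\<lambda>t. fst (G (t, snd p))) (fst p), deriv (\<lambda>t. snd (G (t, snd p))) (fst p))"

definition pd2 :: "(complex \<times> complex \<Rightarrow> complex \<times> complex) \<Rightarrow> complex \<times> complex \<Rightarrow> complex \<times> complex" where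
  "pd2 G p = (deriv (\<lambda>t. fst (G (fst p, t))) (snd p), deriv (\<lambda>t. snd (G (fst p, t))) (snd p))"

text \<open>The quadratic form H_{A,B} evaluated on a fibre tangent vector v = (du1, du2).\<close>
definition Hform :: "complex \<times> complex \<Rightarrow> complex \<times> complex \<Rightarrow> complex \<times> complex \<Rightarrow> complex" where
  "Hform A B v = ((snd A * fst v - fst A * snd v) * (snd B * fst v - fst B * snd v))
                 / (snd A * fst B - fst A * snd B)^2"

end

theory Submission
  imports Defs "HOL-Complex_Analysis.Complex_Analysis"
begin

lemma holo2_partials:
  assumes "holo2 g V" "(r,s) \<in> V"
  shows "((\<lambda>t. g (t,s)) has_field_derivative deriv (\<lambda>t. g(t,s)) r) (at r)"
    and "((\<lambda>t. g (r,t)) has_field_derivative deriv (\<lambda>t. g(r,t)) s) (at s)"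
    and "(g has_derivative (\<lambda>h. deriv (\<lambda>t. g(t,s)) r * fst h + deriv (\<lambda>t. g(r,t)) s * snd h)) (at (r,s))"
proof -
  obtain A B where d: "(g has_derivative (\<lambda>h. A * fst h + B * snd h)) (at (r,s))"
    using assms unfolding holo2_def by blast
  have i1: "((\<lambda>t. (t,s)) has_derivative (\<lambda>h. (h,0))) (at r)"
    by (auto intro!: derivative_eq_intros)
  have i2: "((\<lambda>t. (r,t)) has_derivative (\<lambda>h. (0,h))) (at s)"
    by (auto intro!: derivative_eq_intros)
  have "((\<lambda>t. g (t,s)) has_derivative (\<lambda>h. A * h)) (at r)"
    using has_derivative_compose[OF i1 d] by (simp add: o_def)
  hence a: "((\<lambda>t. g (t,s)) has_field_derivative A) (at r)"
    unfolding has_field_derivative_def by (metis (no_types) mult.commute)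
  have "((\<lambda>t. g (r,t)) has_derivative (\<lambda>h. B * h)) (at s)"
    using has_derivative_compose[OF i2 d] by (simp add: o_def)
  hence b: "((\<lambda>t. g (r,t)) has_field_derivative B) (at s)"
    unfolding has_field_derivative_def by (metis (no_types) mult.commute)
  have eA: "deriv (\<lambda>t. g(t,s)) r = A" using a by (rule DERIV_imp_deriv)
  have eB: "deriv (\<lambda>t. g(r,t)) s = B" using b by (rule DERIV_imp_deriv)
  show "((\<lambda>t. g (t,s)) has_field_derivative deriv (\<lambda>t. g(t,s)) r) (at r)" using a eA by simp
  show "((\<lambda>t. g (r,t)) has_field_derivative deriv (\<lambda>t. g(r,t)) s) (at s)" using b eB by simp
  show "(g has_derivative (\<lambda>h. deriv (\<lambda>t. g(t,s)) r * fst h + deriv (\<lambda>t. g(r,t)) s * snd h)) (at (r,s))"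
    using d eA eB by simp
qed

lemma holo2_cont: assumes "holo2 g V" shows "continuous_on V g"
proof -
  have "\<forall>p\<in>V. isCont g p" using assms unfolding holo2_def
    by (metis has_derivative_continuous)
  thus ?thesis by (simp add: continuous_at_imp_continuous_on)
qed

lemma holo2_swap: assumes "holo2 g V" shows "holo2 (\<lambda>p. g (snd p, fst p)) (prod.swap ` V)"
  unfolding holo2_def
proof
  fix p assume "p \<in> prod.swap ` V"
  then obtain q where q: "q \<in> V" "p = prod.swap q" by auto
  obtain A B where d: "(g has_derivative (\<lambda>h. A * fst h + B * snd h)) (at q)"
    using assms q unfolding holo2_def by blast
  have i: "((\<lambda>p. (snd p, fst p)) has_derivative (\<lambda>h. (snd h, fst h))) (at p)"
    by (auto intro!: derivative_eq_intros)
  have "(\<lambda>p. (snd p, fst p)) p = q" using q by auto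
  hence d': "(g has_derivative (\<lambda>h. A * fst h + B * snd h)) (at ((\<lambda>p. (snd p, fst p)) p))" using d by simp
  have "((\<lambda>p. g (snd p, fst p)) has_derivative (\<lambda>h. B * fst h + A * snd h)) (at p)"
    using has_derivative_compose[OF i d'] 
    by (rule has_derivative_eq_rhs) (auto simp: o_def add.commute fun_eq_iff)
  thus "\<exists>A B. ((\<lambda>p. g (snd p, fst p)) has_derivative (\<lambda>h. A * fst h + B * snd h)) (at p)" by blast
qed

lemma circ_in_sphere: "0 \<le> e \<Longrightarrow> t \<in> {0..1} \<Longrightarrow> circlepath z e t \<in> sphere z e"
  using path_image_circlepath_nonneg[of e z] unfolding path_image_def by auto

lemma circ_integrand_cont:
  assumes e: "0 \<le> e" and K: "continuous_on (Q \<times> sphere z e) (\<lambda>(q,w). K q w)"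
  shows "continuous_on (Q \<times> cbox 0 1) (\<lambda>(q,t). K q (circlepath z e t) * vector_derivative (circlepath z e) (at t))"
proof -
  have c1: "continuous_on (Q \<times> cbox 0 1) (\<lambda>(q,t::real). (q, circlepath z e t))"
    unfolding circlepath split_beta by (intro continuous_intros)
  have im: "(\<lambda>(q,t::real). (q, circlepath z e t)) ` (Q \<times> cbox 0 1) \<subseteq> Q \<times> sphere z e"
    using circ_in_sphere[OF e] by auto
  have c2: "continuous_on (Q \<times> cbox 0 1) (\<lambda>(q,t::real). K q (circlepath z e t))"
    using continuous_on_compose[OF c1 continuous_on_subset[OF K im]] by (simp add: o_def split_beta)
  have c3: "continuous_on (Q \<times> cbox 0 1) (\<lambda>(q,t::real). vector_derivative (circlepath z e) (at t))"
    unfolding vector_derivative_circlepath split_beta by (intro continuous_intros)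
  show ?thesis using continuous_on_mult[OF c2 c3] by (simp add: split_beta)
qed

lemma circ_param_cont:
  assumes e: "0 \<le> e" and K: "continuous_on (Q \<times> sphere z e) (\<lambda>(q,w). K q w)"
  shows "continuous_on Q (\<lambda>q. contour_integral (circlepath z e) (K q))"
proof -
  have "continuous_on Q (\<lambda>q. integral (cbox 0 1) (\<lambda>t. K q (circlepath z e t) * vector_derivative (circlepath z e) (at t)))"
    using integral_continuous_on_param[OF circ_integrand_cont[OF e K]] by simp
  thus ?thesis unfolding contour_integral_integral by simp
qed

lemma circ_param_deriv:
  assumes e: "0 \<le> e" and Q: "convex Q" "q0 \<in> Q"
    and d: "\<And>q w. q \<in> Q \<Longrightarrow> w \<in> sphere z e \<Longrightarrow> ((\<lambda>q. K q w) has_field_derivative K' q w) (at q within Q)"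
    and K: "continuous_on (Q \<times> sphere z e) (\<lambda>(q,w). K q w)"
    and K': "continuous_on (Q \<times> sphere z e) (\<lambda>(q,w). K' q w)"
  shows "((\<lambda>q. contour_integral (circlepath z e) (K q)) has_field_derivative contour_integral (circlepath z e) (K' q0)) (at q0 within Q)"
proof -
  have c: "continuous_on (Q \<times> cbox 0 1) (\<lambda>(q,t). K' q (circlepath z e t) * vector_derivative (circlepath z e) (at t))"
    by (rule circ_integrand_cont[OF e K'])
  have ck: "continuous_on (Q \<times> cbox 0 1) (\<lambda>(q,t). K q (circlepath z e t) * vector_derivative (circlepath z e) (at t))"
    by (rule circ_integrand_cont[OF e K])
  have int: "(\<lambda>t. K q (circlepath z e t) * vector_derivative (circlepath z e) (at t)) integrable_on cbox 0 1" if "q \<in> Q" for q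
  proof (rule integrable_continuous)
    have ck': "continuous_on ((\<lambda>t. (q,t)) ` cbox 0 1) (\<lambda>(q,t). K q (circlepath z e t) * vector_derivative (circlepath z e) (at t))"
      by (rule continuous_on_subset[OF ck]) (use that in auto)
    have c0: "continuous_on (cbox 0 1) (\<lambda>t::real. (q,t))" by (intro continuous_intros)
    from continuous_on_compose[OF c0 ck']
    show "continuous_on (cbox 0 1) (\<lambda>t. K q (circlepath z e t) * vector_derivative (circlepath z e) (at t))"
      by (auto simp: o_def intro: continuous_intros)
  qed
  have dd: "((\<lambda>q. K q (circlepath z e t) * vector_derivative (circlepath z e) (at t)) has_field_derivative
            K' q (circlepath z e t) * vector_derivative (circlepath z e) (at t)) (at q within Q)"
    if "q \<in> Q" "t \<in> cbox 0 1" for q t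
    using d[OF that(1) circ_in_sphere[OF e, of t]] that(2)
    by (auto intro!: derivative_eq_intros)
  show ?thesis
    using leibniz_rule_field_derivative[OF dd int c Q(2,1)]
    unfolding contour_integral_integral by simp
qed

definition D1 :: "(complex \<times> complex \<Rightarrow> complex) \<Rightarrow> complex \<times> complex \<Rightarrow> complex" where
  "D1 g p = deriv (\<lambda>t. g (t, snd p)) (fst p)"
definition D2 :: "(complex \<times> complex \<Rightarrow> complex) \<Rightarrow> complex \<times> complex \<Rightarrow> complex" where
  "D2 g p = deriv (\<lambda>t. g (fst p, t)) (snd p)"

lemma box_nbhd:
  assumes "open V" "(r0, s0) \<in> V"
  obtains e where "e > 0" "cball r0 e \<times> cball s0 e \<subseteq> V"
proof -
  obtain d where d: "d > 0" "ball (r0,s0) d \<subseteq> V" using assms open_contains_ball by blast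
  have "cball r0 (d/3) \<times> cball s0 (d/3) \<subseteq> V"
  proof
    fix p assume p: "p \<in> cball r0 (d/3) \<times> cball s0 (d/3)"
    obtain r s where rs: "p = (r,s)" by (cases p)
    have "dist (r0,s0) (r,s) \<le> dist r0 r + dist s0 s"
      unfolding dist_Pair_Pair by (rule sqrt_sum_squares_le_sum) auto
    also have "\<dots> < d" using p rs d by auto
    finally show "p \<in> V" using d rs by auto
  qed
  moreover have "d/3 > 0" using d by simp
  ultimately show ?thesis using that by blast
qed

lemma cauchy1:
  assumes "continuous_on (cball z e) f" "f holomorphic_on ball z e" "w \<in> ball z e"
  shows "deriv f w = contour_integral (circlepath z e) (\<lambda>u. f u / (u - w)^2) / (2 * pi * \<i>)"
proof -
  have "((\<lambda>u. f u / (u - w)^2) has_contour_integral (2 * pi * \<i> * deriv f w)) (circlepath z e)"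
    using Cauchy_has_contour_integral_higher_derivative_circlepath[OF assms, of 1] by (simp add: power2_eq_square)
  hence "contour_integral (circlepath z e) (\<lambda>u. f u / (u - w)^2) = 2 * pi * \<i> * deriv f w"
    by (rule contour_integral_unique)
  thus ?thesis by simp
qed

lemma cont_comp_on:
  assumes "continuous_on V g" "continuous_on S h" "h ` S \<subseteq> V"
  shows "continuous_on S (\<lambda>x. g (h x))"
  using continuous_on_compose[OF assms(2) continuous_on_subset[OF assms(1,3)]] by (simp add: o_def)

lemma D1_cont:
  assumes hg: "holo2 g V" and V: "open V"
  shows "continuous_on V (D1 g)"
proof -
  have cg: "continuous_on V g" using hg by (rule holo2_cont)
  have "isCont (D1 g) p" if p: "p \<in> V" for p
  proof -
    obtain r0 s0 where p0: "p = (r0,s0)" by (cases p)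
    obtain e where e: "e > 0" "cball r0 e \<times> cball s0 e \<subseteq> V" using box_nbhd[OF V] p p0 by metis
    define Q where "Q = ball r0 e \<times> ball s0 e"
    have oQ: "open Q" unfolding Q_def by (simp add: open_Times)
    have pQ: "p \<in> Q" using p0 e unfolding Q_def by auto
    have eq: "D1 g q = contour_integral (circlepath r0 e) (\<lambda>u. g (u, snd q) / (u - fst q)^2) / (2 * pi * \<i>)"
      if q: "q \<in> Q" for q
    proof -
      have sub: "(\<lambda>t. (t, snd q)) ` cball r0 e \<subseteq> V" using q e unfolding Q_def by auto
      have c: "continuous_on (cball r0 e) (\<lambda>t. g (t, snd q))"
        by (rule cont_comp_on[OF cg _ sub]) (intro continuous_intros)
      have h: "(\<lambda>t. g (t, snd q)) holomorphic_on ball r0 e"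
        unfolding holomorphic_on_def
      proof
        fix t assume "t \<in> ball r0 e"
        hence "(t, snd q) \<in> V" using sub by auto
        from holo2_partials(1)[OF hg this] show "(\<lambda>t. g (t, snd q)) field_differentiable at t within ball r0 e"
          using field_differentiable_at_within field_differentiable_def by blast
      qed
      show ?thesis unfolding D1_def using cauchy1[OF c h] q unfolding Q_def by auto
    qed
    have cK: "continuous_on (Q \<times> sphere r0 e) (\<lambda>(q,u). g (u, snd q) / (u - fst q)^2)"
    proof -
      have sub: "(\<lambda>x. (snd x, snd (fst x))) ` (Q \<times> sphere r0 e) \<subseteq> V" using e unfolding Q_def by auto
      have c1: "continuous_on (Q \<times> sphere r0 e) (\<lambda>x. g (snd x, snd (fst x)))"
        by (rule cont_comp_on[OF cg _ sub]) (intro continuous_intros)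
      have nz: "\<forall>x\<in>Q \<times> sphere r0 e. (snd x - fst (fst x))^2 \<noteq> 0"
        unfolding Q_def by (auto simp: dist_commute)
      show ?thesis unfolding split_beta by (intro continuous_intros c1 nz)
    qed
    have "continuous_on Q (\<lambda>q. contour_integral (circlepath r0 e) (\<lambda>u. g (u, snd q) / (u - fst q)^2) / (2 * pi * \<i>))"
      using circ_param_cont[OF _ cK] e(1) by (auto intro!: continuous_intros)
    hence "continuous_on Q (D1 g)" using eq by (simp add: continuous_on_eq)
    thus ?thesis using oQ pQ continuous_on_eq_continuous_at by blast
  qed
  thus ?thesis by (simp add: continuous_at_imp_continuous_on)
qed

lemma open_swap: "open V \<Longrightarrow> open (prod.swap ` V)"
proof -
  assume V: "open V"
  have "prod.swap ` V = prod.swap -` V" by (auto simp: image_iff) (metis swap_simp swap_swap)+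
  moreover have "open (prod.swap -` V)" by (rule open_vimage[OF V]) (auto intro: continuous_intros)
  ultimately show ?thesis by simp
qed

lemma D2_swap: "D2 g (r,s) = D1 (\<lambda>p. g (snd p, fst p)) (s,r)"
  unfolding D1_def D2_def by simp

lemma D1_swap: "D1 g (r,s) = D2 (\<lambda>p. g (snd p, fst p)) (s,r)"
  unfolding D1_def D2_def by simp

lemma D2_cont:
  assumes hg: "holo2 g V" and V: "open V"
  shows "continuous_on V (D2 g)"
proof -
  have c: "continuous_on (prod.swap ` V) (D1 (\<lambda>p. g (snd p, fst p)))"
    by (rule D1_cont[OF holo2_swap[OF hg] open_swap[OF V]])
  have "continuous_on V (\<lambda>p. D1 (\<lambda>p. g (snd p, fst p)) (prod.swap p))"
    by (rule cont_comp_on[OF c]) (auto intro: continuous_intros)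
  moreover have "(\<lambda>p. D1 (\<lambda>p. g (snd p, fst p)) (prod.swap p)) = D2 g"
    by (auto simp: fun_eq_iff D2_swap)
  ultimately show ?thesis by metis
qed

lemma D2_dr:
  assumes hg: "holo2 g V" and V: "open V" and e: "e > 0" "cball r0 e \<times> cball s0 e \<subseteq> V"
  shows "((\<lambda>t. D2 g (t,s0)) has_field_derivative
           contour_integral (circlepath s0 e) (\<lambda>u. D1 g (r0,u) / (u - s0)^2) / (2 * pi * \<i>)) (at r0)"
proof -
  have cg: "continuous_on V g" using hg by (rule holo2_cont)
  have c1: "continuous_on V (D1 g)" by (rule D1_cont[OF hg V])
  define Q where "Q = ball r0 e"
  have eq: "D2 g (r,s0) = contour_integral (circlepath s0 e) (\<lambda>u. g (r,u) / (u - s0)^2) / (2 * pi * \<i>)"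
    if r: "r \<in> Q" for r
  proof -
    have sub: "(\<lambda>t. (r,t)) ` cball s0 e \<subseteq> V" using r e unfolding Q_def by auto
    have c: "continuous_on (cball s0 e) (\<lambda>t. g (r,t))"
      by (rule cont_comp_on[OF cg _ sub]) (intro continuous_intros)
    have h: "(\<lambda>t. g (r,t)) holomorphic_on ball s0 e"
      unfolding holomorphic_on_def
    proof
      fix t assume "t \<in> ball s0 e"
      hence "(r,t) \<in> V" using sub by auto
      from holo2_partials(2)[OF hg this] show "(\<lambda>t. g (r,t)) field_differentiable at t within ball s0 e"
        using field_differentiable_at_within field_differentiable_def by blast
    qed
    show ?thesis unfolding D2_def using cauchy1[OF c h] e(1) by auto
  qed
  have cK: "continuous_on (Q \<times> sphere s0 e) (\<lambda>(r,u). g (r,u) / (u - s0)^2)"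
  proof -
    have sub: "(\<lambda>x. x) ` (Q \<times> sphere s0 e) \<subseteq> V" using e unfolding Q_def by auto
    have c1: "continuous_on (Q \<times> sphere s0 e) (\<lambda>x. g x)"
      by (rule cont_comp_on[OF cg _ sub]) (intro continuous_intros)
    have nz: "\<forall>x\<in>Q \<times> sphere s0 e. (snd x - s0)^2 \<noteq> 0"
      unfolding Q_def using e(1) by (auto simp: dist_commute)
    show ?thesis unfolding split_beta prod.collapse by (intro continuous_intros c1 nz) 
  qed
  have cK': "continuous_on (Q \<times> sphere s0 e) (\<lambda>(r,u). D1 g (r,u) / (u - s0)^2)"
  proof -
    have sub: "(\<lambda>x. x) ` (Q \<times> sphere s0 e) \<subseteq> V" using e unfolding Q_def by auto
    have c2: "continuous_on (Q \<times> sphere s0 e) (\<lambda>x. D1 g x)"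
      by (rule cont_comp_on[OF c1 _ sub]) (intro continuous_intros)
    have nz: "\<forall>x\<in>Q \<times> sphere s0 e. (snd x - s0)^2 \<noteq> 0"
      unfolding Q_def using e(1) by (auto simp: dist_commute)
    show ?thesis unfolding split_beta prod.collapse by (intro continuous_intros c2 nz) 
  qed
  have d: "((\<lambda>r. g (r,u) / (u - s0)^2) has_field_derivative D1 g (r,u) / (u - s0)^2) (at r within Q)"
    if "r \<in> Q" "u \<in> sphere s0 e" for r u
  proof -
    have "(r,u) \<in> V" using that e unfolding Q_def by auto
    from holo2_partials(1)[OF hg this] show ?thesis unfolding D1_def
      by (intro DERIV_cdivide) (rule has_field_derivative_at_within, simp)
  qed
  have r0Q: "r0 \<in> Q" unfolding Q_def using e by simp
  have "((\<lambda>r. contour_integral (circlepath s0 e) (\<lambda>u. g (r,u) / (u - s0)^2)) has_field_derivative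
          contour_integral (circlepath s0 e) (\<lambda>u. D1 g (r0,u) / (u - s0)^2)) (at r0 within Q)"
    by (rule circ_param_deriv[OF _ _ r0Q d cK cK']) (use e in \<open>simp_all add: Q_def\<close>)
  hence "((\<lambda>r. contour_integral (circlepath s0 e) (\<lambda>u. g (r,u) / (u - s0)^2)) has_field_derivative
          contour_integral (circlepath s0 e) (\<lambda>u. D1 g (r0,u) / (u - s0)^2)) (at r0)"
    using at_within_open[OF r0Q] unfolding Q_def by simp
  hence "((\<lambda>r. contour_integral (circlepath s0 e) (\<lambda>u. g (r,u) / (u - s0)^2) / (2 * pi * \<i>)) has_field_derivative
          contour_integral (circlepath s0 e) (\<lambda>u. D1 g (r0,u) / (u - s0)^2) / (2 * pi * \<i>)) (at r0)"
    by (auto intro!: derivative_eq_intros)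
  thus ?thesis
  proof (rule has_field_derivative_transform_within_open[where S=Q])
    show "open Q" unfolding Q_def by simp
    show "r0 \<in> Q" by (rule r0Q)
  qed (simp add: eq)
qed

lemma D1_diff2:
  assumes hg: "holo2 g V" and V: "open V" and p: "(r,s) \<in> V"
  shows "(\<lambda>t. D1 g (r,t)) field_differentiable at s"
proof -
  have p': "(s,r) \<in> prod.swap ` V" using p by simp
  obtain e where e: "e > 0" "cball s e \<times> cball r e \<subseteq> prod.swap ` V"
    using box_nbhd[OF open_swap[OF V] p'] by metis
  from D2_dr[OF holo2_swap[OF hg] open_swap[OF V] e]
  show ?thesis unfolding field_differentiable_def D1_swap by blast
qed

lemma mixed:
  assumes hg: "holo2 g V" and V: "open V" and p: "(r0,s0) \<in> V"
  shows "((\<lambda>t. D1 g (r0,t)) has_field_derivative deriv (\<lambda>t. D1 g (r0,t)) s0) (at s0)"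
    and "((\<lambda>t. D2 g (t,s0)) has_field_derivative deriv (\<lambda>t. D1 g (r0,t)) s0) (at r0)"
proof -
  show "((\<lambda>t. D1 g (r0,t)) has_field_derivative deriv (\<lambda>t. D1 g (r0,t)) s0) (at s0)"
    using D1_diff2[OF hg V p] DERIV_deriv_iff_field_differentiable by blast
  obtain e where e: "e > 0" "cball r0 e \<times> cball s0 e \<subseteq> V" using box_nbhd[OF V p] by metis
  have sub: "(\<lambda>t. (r0,t)) ` cball s0 e \<subseteq> V" using e by auto
  have c: "continuous_on (cball s0 e) (\<lambda>t. D1 g (r0,t))"
    by (rule cont_comp_on[OF D1_cont[OF hg V] _ sub]) (intro continuous_intros)
  have h: "(\<lambda>t. D1 g (r0,t)) holomorphic_on ball s0 e"
    unfolding holomorphic_on_def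
  proof
    fix t assume "t \<in> ball s0 e"
    hence "(r0,t) \<in> V" using sub by auto
    from D1_diff2[OF hg V this] show "(\<lambda>t. D1 g (r0,t)) field_differentiable at t within ball s0 e"
      using field_differentiable_at_within by blast
  qed
  have "deriv (\<lambda>t. D1 g (r0,t)) s0 = contour_integral (circlepath s0 e) (\<lambda>u. D1 g (r0,u) / (u - s0)^2) / (2 * pi * \<i>)"
    by (rule cauchy1[OF c h]) (use e in simp)
  with D2_dr[OF hg V e]
  show "((\<lambda>t. D2 g (t,s0)) has_field_derivative deriv (\<lambda>t. D1 g (r0,t)) s0) (at r0)" by simp
qed

lemma D1_diff1:
  assumes hg: "holo2 g V" and V: "open V" and p: "(r,s) \<in> V"
  shows "(\<lambda>t. D1 g (t,s)) field_differentiable at r"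
proof -
  define S where "S = (\<lambda>t. (t,s)) -` V"
  have oS: "open S" unfolding S_def by (rule open_vimage[OF V]) (auto intro: continuous_intros)
  have h: "(\<lambda>t. g (t,s)) holomorphic_on S"
    unfolding holomorphic_on_def
  proof
    fix t assume "t \<in> S"
    hence "(t,s) \<in> V" unfolding S_def by auto
    from holo2_partials(1)[OF hg this] show "(\<lambda>t. g (t,s)) field_differentiable at t within S"
      using field_differentiable_at_within field_differentiable_def by blast
  qed
  have "deriv (\<lambda>t. g (t,s)) holomorphic_on S" by (rule holomorphic_deriv[OF h oS])
  moreover have "r \<in> S" using p unfolding S_def by simp
  ultimately have "deriv (\<lambda>t. g (t,s)) field_differentiable at r"
    using oS holomorphic_on_imp_differentiable_at by blast
  moreover have "(\<lambda>t. D1 g (t,s)) = deriv (\<lambda>t. g (t,s))" unfolding D1_def by (simp add: fun_eq_iff)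
  ultimately show ?thesis by simp
qed

lemma D2_diff2:
  assumes hg: "holo2 g V" and V: "open V" and p: "(r,s) \<in> V"
  shows "(\<lambda>t. D2 g (r,t)) field_differentiable at s"
proof -
  have p': "(s,r) \<in> prod.swap ` V" using p by simp
  from D1_diff1[OF holo2_swap[OF hg] open_swap[OF V] p']
  show ?thesis unfolding D2_swap by simp
qed

lemma prim:
  fixes a b :: "complex \<times> complex \<Rightarrow> complex" and m :: "complex \<Rightarrow> complex \<Rightarrow> complex"
  assumes e: "e > 0"
    and cb: "continuous_on (ball z0 e \<times> ball x0 e) b"
    and cm: "continuous_on (ball z0 e \<times> ball x0 e) (\<lambda>p. m (fst p) (snd p))"
    and da1: "\<And>z. z \<in> ball z0 e \<Longrightarrow> (\<lambda>t. a (t,x0)) field_differentiable at z"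
    and db2: "\<And>z x. z \<in> ball z0 e \<Longrightarrow> x \<in> ball x0 e \<Longrightarrow> (\<lambda>t. b (z,t)) field_differentiable at x"
    and da2: "\<And>z x. z \<in> ball z0 e \<Longrightarrow> x \<in> ball x0 e \<Longrightarrow> ((\<lambda>t. a (z,t)) has_field_derivative m z x) (at x)"
    and db1: "\<And>z x. z \<in> ball z0 e \<Longrightarrow> x \<in> ball x0 e \<Longrightarrow> ((\<lambda>t. b (t,x)) has_field_derivative m z x) (at z)"
  shows "\<exists>F. \<forall>z\<in>ball z0 e. \<forall>x\<in>ball x0 e. (F has_derivative (\<lambda>h. a (z,x) * fst h + b (z,x) * snd h)) (at (z,x))"
proof -
  define X where "X = ball z0 e"
  define Y where "Y = ball x0 e"
  have x0Y: "x0 \<in> Y" unfolding Y_def using e by simp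
  have hX: "(\<lambda>t. a (t,x0)) holomorphic_on X"
    unfolding holomorphic_on_def X_def using da1 field_differentiable_at_within by blast
  obtain Phi where Phi: "\<And>z. z \<in> X \<Longrightarrow> (Phi has_field_derivative a (z,x0)) (at z within X)"
    using holomorphic_convex_primitive'[OF _ _ hX] unfolding X_def by auto
  have Phi': "(Phi has_field_derivative a (z,x0)) (at z)" if "z \<in> X" for z
    using Phi[OF that] at_within_open[OF that] unfolding X_def by simp
  define Psi where "Psi = (\<lambda>z x. contour_integral (linepath x0 x) (\<lambda>u. b (z,u)))"
  have segY: "closed_segment x0 x \<subseteq> Y" if "x \<in> Y" for x
    using x0Y that convex_contains_segment[of Y] unfolding Y_def by auto
  have lpY: "linepath x0 x t \<in> Y" if "x \<in> Y" "t \<in> {0..1}" for x t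
    using segY[OF that(1)] linepath_in_path[OF that(2)] by blast
  have Psi_x: "((\<lambda>x. Psi z x) has_field_derivative b (z,x)) (at x)" if z: "z \<in> X" and x: "x \<in> Y" for z x
  proof -
    have hY: "(\<lambda>u. b (z,u)) holomorphic_on Y"
      unfolding holomorphic_on_def using db2 z field_differentiable_at_within unfolding X_def Y_def by blast
    obtain P where P: "\<And>u. u \<in> Y \<Longrightarrow> (P has_field_derivative b (z,u)) (at u within Y)"
      using holomorphic_convex_primitive'[OF _ _ hY] unfolding Y_def by auto
    have eq: "Psi z y = P y - P x0" if "y \<in> Y" for y
    proof -
      have "((\<lambda>u. b (z,u)) has_contour_integral (P (pathfinish (linepath x0 y)) - P (pathstart (linepath x0 y)))) (linepath x0 y)"
        by (rule contour_integral_primitive[OF P]) (use segY[OF that] in auto)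
      thus ?thesis unfolding Psi_def using contour_integral_unique by simp
    qed
    have "(P has_field_derivative b (z,x)) (at x)" using P[OF x] at_within_open[OF x] unfolding Y_def by simp
    hence "((\<lambda>y. P y - P x0) has_field_derivative b (z,x)) (at x)" by (auto intro!: derivative_eq_intros)
    thus ?thesis
      by (rule has_field_derivative_transform_within_open[where S=Y]) (use x eq in \<open>simp_all add: Y_def\<close>)
  qed
  have Psi_z: "((\<lambda>z. Psi z x) has_field_derivative a (z,x) - a (z,x0)) (at z)" if z: "z \<in> X" and x: "x \<in> Y" for z x
  proof -
    have rep: "Psi z' x = integral (cbox 0 1) (\<lambda>t. b (z', linepath x0 x t) * (x - x0))" for z'
      unfolding Psi_def contour_integral_integral by simp
    have sub: "(\<lambda>p. (fst p, linepath x0 x (snd p))) ` (X \<times> cbox 0 1) \<subseteq> ball z0 e \<times> ball x0 e"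
      using lpY[OF x] unfolding X_def Y_def by auto
    have cl: "continuous_on (X \<times> cbox 0 1) (\<lambda>p. (fst p, linepath x0 x (snd p)))"
      unfolding linepath_def by (intro continuous_intros)
    have cM: "continuous_on (X \<times> cbox 0 1) (\<lambda>(z',t). m z' (linepath x0 x t) * (x - x0))"
      using cont_comp_on[OF cm cl sub] unfolding split_beta by (intro continuous_intros) auto
    have cB: "continuous_on (X \<times> cbox 0 1) (\<lambda>p. b (fst p, linepath x0 x (snd p)))"
      by (rule cont_comp_on[OF cb cl sub])
    have int: "(\<lambda>t. b (z', linepath x0 x t) * (x - x0)) integrable_on cbox 0 1" if "z' \<in> X" for z'
    proof (rule integrable_continuous)
      have c0: "continuous_on (cbox 0 1) (\<lambda>t::real. (z',t))" by (intro continuous_intros)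
      have cB': "continuous_on ((\<lambda>t. (z',t)) ` cbox 0 1) (\<lambda>p. b (fst p, linepath x0 x (snd p)))"
        by (rule continuous_on_subset[OF cB]) (use that in auto)
      from continuous_on_compose[OF c0 cB']
      show "continuous_on (cbox 0 1) (\<lambda>t. b (z', linepath x0 x t) * (x - x0))"
        by (auto simp: o_def intro!: continuous_intros)
    qed
    have dd: "((\<lambda>z'. b (z', linepath x0 x t) * (x - x0)) has_field_derivative m z' (linepath x0 x t) * (x - x0)) (at z' within X)"
      if "z' \<in> X" "t \<in> cbox 0 1" for z' t
    proof -
      have "linepath x0 x t \<in> Y" using lpY[OF x] that(2) by simp
      from db1[OF _ this[unfolded Y_def]] that(1) show ?thesis unfolding X_def
        by (intro DERIV_cmult_right) (rule has_field_derivative_at_within, simp)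
    qed
    have "((\<lambda>z'. integral (cbox 0 1) (\<lambda>t. b (z', linepath x0 x t) * (x - x0))) has_field_derivative
            integral (cbox 0 1) (\<lambda>t. m z (linepath x0 x t) * (x - x0))) (at z within X)"
      by (rule leibniz_rule_field_derivative[OF dd int cM z]) (auto simp: X_def)
    moreover have "integral (cbox 0 1) (\<lambda>t. m z (linepath x0 x t) * (x - x0)) = a (z,x) - a (z,x0)"
    proof -
      have "((\<lambda>u. m z u) has_contour_integral (a (z, pathfinish (linepath x0 x)) - a (z, pathstart (linepath x0 x)))) (linepath x0 x)"
        by (rule contour_integral_primitive[where S=Y])
           (use segY[OF x] da2 z in \<open>auto simp: X_def Y_def intro: has_field_derivative_at_within\<close>)
      hence "contour_integral (linepath x0 x) (\<lambda>u. m z u) = a (z,x) - a (z,x0)"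
        using contour_integral_unique by simp
      thus ?thesis unfolding contour_integral_integral by simp
    qed
    ultimately have "((\<lambda>z'. Psi z' x) has_field_derivative a (z,x) - a (z,x0)) (at z within X)"
      unfolding rep by simp
    thus ?thesis using at_within_open[OF z] unfolding X_def by simp
  qed
  define F where "F = (\<lambda>p. Phi (fst p) + Psi (fst p) (snd p))"
  have "(F has_derivative (\<lambda>h. a (z,x) * fst h + b (z,x) * snd h)) (at (z,x))" if z: "z \<in> X" and x: "x \<in> Y" for z x
  proof -
    have fx: "((\<lambda>z. Phi z + Psi z x) has_derivative (\<lambda>h. h * a (z,x))) (at z within X)"
    proof -
      have "((\<lambda>z. Phi z + Psi z x) has_field_derivative a (z,x0) + (a (z,x) - a (z,x0))) (at z)"
        by (intro DERIV_add Phi'[OF z] Psi_z[OF z x])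
      hence "((\<lambda>z. Phi z + Psi z x) has_field_derivative a (z,x)) (at z within X)"
        by (simp add: has_field_derivative_at_within)
      moreover have "(\<lambda>h. h * a (z,x)) = (*) (a (z,x))" by (auto simp: fun_eq_iff)
      ultimately show ?thesis unfolding has_field_derivative_def by simp
    qed
    have fy: "((\<lambda>y. Phi z' + Psi z' y) has_derivative blinfun_apply (blinfun_mult_right (b (z',y)))) (at y within Y)"
      if "z' \<in> X" "y \<in> Y" for z' y
    proof -
      have "((\<lambda>y. Phi z' + Psi z' y) has_field_derivative b (z',y)) (at y)"
        using Psi_x[OF that] by (auto intro!: derivative_eq_intros)
      hence "((\<lambda>y. Phi z' + Psi z' y) has_field_derivative b (z',y)) (at y within Y)"
        by (rule has_field_derivative_at_within)
      thus ?thesis by (simp add: has_field_derivative_def)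
    qed
    have cfy: "continuous (at (z,x) within X \<times> Y) (\<lambda>(z',y). blinfun_mult_right (b (z',y)))"
    proof -
      have "continuous_on (X \<times> Y) (\<lambda>p. blinfun_mult_right (b p))"
        using cb unfolding X_def Y_def by (intro continuous_intros)
      hence "continuous (at (z,x) within X \<times> Y) (\<lambda>p. blinfun_mult_right (b p))"
        using z x continuous_on_eq_continuous_within by blast
      moreover have "(\<lambda>(z',y). blinfun_mult_right (b (z',y))) = (\<lambda>p. blinfun_mult_right (b p))" by auto
      ultimately show ?thesis by simp
    qed
    have "((\<lambda>(z,y). Phi z + Psi z y) has_derivative (\<lambda>(tx,ty). tx * a (z,x) + blinfun_apply (blinfun_mult_right (b (z,x))) ty)) (at (z,x) within X \<times> Y)"
      using has_derivative_partialsI[OF fx fy cfy x] convex_ball[of x0 e] unfolding Y_def by blast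
    moreover have "at (z,x) within X \<times> Y = at (z,x)"
      using z x by (intro at_within_open) (auto simp: X_def Y_def open_Times)
    ultimately have "((\<lambda>(z,y). Phi z + Psi z y) has_derivative (\<lambda>(tx,ty). tx * a (z,x) + b (z,x) * ty)) (at (z,x))"
      by simp
    moreover have "(\<lambda>(z,y). Phi z + Psi z y) = F" unfolding F_def by auto
    moreover have "(\<lambda>(tx,ty). tx * a (z,x) + b (z,x) * ty) = (\<lambda>h. a (z,x) * fst h + b (z,x) * snd h)"
      by (auto simp: fun_eq_iff mult.commute)
    ultimately show ?thesis by simp
  qed
  thus ?thesis unfolding X_def Y_def by blast
qed

lemma alg1:
  fixes k c u w y lam L2 P Q M fzx Dz Dx :: complex
  assumes k: "k \<noteq> 0" and nz: "u \<noteq> 0" and nx: "w \<noteq> 0" and zx: "y \<noteq> 0" and l: "lam \<noteq> 0"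
    and uw: "u - w = c * y"
    and lsq: "lam^2 = u/w"
    and L2: "2*lam*L2 = -c*u/w^2"
    and M: "M = 1/(2*fzx) * (P - Q)"
    and fzx: "fzx = k*y/(u*w)"
    and Dz: "Dz = k/u^2" and Dx: "Dx = k/w^2"
  shows "L2*(Dz*P) + lam*(Dz*(M*Dx)) = 1/(2*y) * (lam*(Dz*P) - 1/lam*(Dx*Q))"
proof -
  have il: "1/lam = lam * w/u"
    using lsq l nz nx by (simp add: field_simps power2_eq_square)
  have L2': "L2 = -c*u/(2*w^2) * (1/lam)"
    using L2 l nx by (simp add: field_simps)
  show ?thesis
    unfolding L2' il M fzx Dz Dx using k nz nx zx l
    apply (simp add: field_simps power2_eq_square)
    using uw apply algebra
    done
qed

lemma alg2:
  fixes k c u w y lam L1 P Q M fzx Dz Dx :: complex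
  assumes k: "k \<noteq> 0" and nz: "u \<noteq> 0" and nx: "w \<noteq> 0" and zx: "y \<noteq> 0" and l: "lam \<noteq> 0"
    and uw: "u - w = c * y"
    and lsq: "lam^2 = u/w"
    and L1: "2*lam*L1 = c/w"
    and M: "M = 1/(2*fzx) * (P - Q)"
    and fzx: "fzx = k*y/(u*w)"
    and Dz: "Dz = k/u^2" and Dx: "Dx = k/w^2"
  shows "-(L1/lam^2)*(Dx*Q) + 1/lam*(Dx*(M*Dz)) = 1/(2*y) * (lam*(Dz*P) - 1/lam*(Dx*Q))"
proof -
  have il: "1/lam = lam * w/u"
    using lsq l nz nx by (simp add: field_simps power2_eq_square)
  have e1: "L1 * (lam * (w * 2)) = c" using L1 l nx by (simp add: field_simps)
  have e2: "lam*(lam*w) = u" using lsq nx by (simp add: field_simps power2_eq_square)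
  have e3: "L1*(u*2) = lam*(L1*(lam*(w*2)))" by (simp add: e2[symmetric] algebra_simps)
  have L1': "L1/lam^2 = c/(2*u) * (lam * w/u)"
    using e1 e2 e3 l nx nz lsq by (simp add: field_simps power2_eq_square)
  show ?thesis
    unfolding L1' il M fzx Dz Dx using k nz nx zx l
    apply (simp add: field_simps power2_eq_square)
    using uw apply algebra
    done
qed

lemma moeb_deriv:
  assumes "c*t+d \<noteq> 0"
  shows "(moebius a b c d has_field_derivative (a*d-b*c)/(c*t+d)^2) (at t)"
proof -
  have "((\<lambda>z. (a*z+b)/(c*z+d)) has_field_derivative ((a*(c*t+d) - (a*t+b)*c)/((c*t+d)*(c*t+d)))) (at t)"
    by (rule DERIV_divide) (auto intro!: derivative_eq_intros simp: assms)
  moreover have "(a*(c*t+d) - (a*t+b)*c)/((c*t+d)*(c*t+d)) = (a*d-b*c)/(c*t+d)^2"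
    by (simp add: power2_eq_square algebra_simps)
  moreover have "moebius a b c d = (\<lambda>z. (a*z+b)/(c*z+d))" by (simp add: fun_eq_iff moebius_def)
  ultimately show ?thesis by simp
qed

lemma moeb_diff:
  assumes "c*z+d \<noteq> 0" "c*x+d \<noteq> 0"
  shows "moebius a b c d z - moebius a b c d x = (a*d-b*c)*(z-x)/((c*z+d)*(c*x+d))"
  unfolding moebius_def using assms by (simp add: field_simps)

lemma has_derivative_partials_deriv:
  assumes "(g has_derivative (\<lambda>h. A * fst h + B * snd h)) (at (r,s))"
  shows "deriv (\<lambda>t. g (t,s)) r = A" "deriv (\<lambda>t. g (r,t)) s = B"
proof -
  have i1: "((\<lambda>t. (t,s)) has_derivative (\<lambda>h. (h,0))) (at r)"
    by (auto intro!: derivative_eq_intros)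
  have i2: "((\<lambda>t. (r,t)) has_derivative (\<lambda>h. (0,h))) (at s)"
    by (auto intro!: derivative_eq_intros)
  have "((\<lambda>t. g (t,s)) has_derivative (\<lambda>h. A * h)) (at r)"
    using has_derivative_compose[OF i1 assms] by (simp add: o_def)
  hence a: "((\<lambda>t. g (t,s)) has_field_derivative A) (at r)"
    unfolding has_field_derivative_def by (metis (no_types) mult.commute)
  have "((\<lambda>t. g (r,t)) has_derivative (\<lambda>h. B * h)) (at s)"
    using has_derivative_compose[OF i2 assms] by (simp add: o_def)
  hence b: "((\<lambda>t. g (r,t)) has_field_derivative B) (at s)"
    unfolding has_field_derivative_def by (metis (no_types) mult.commute)
  show "deriv (\<lambda>t. g (t,s)) r = A" using a by (rule DERIV_imp_deriv)
  show "deriv (\<lambda>t. g (r,t)) s = B" using b by (rule DERIV_imp_deriv)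
qed

lemma Hform_scale:
  assumes "mu \<noteq> 0" "nu \<noteq> 0"
  shows "mu * nu * Hform (csc mu P) (csc nu Q) v = Hform P Q v"
proof -
  define N where "N = (snd P * fst v - fst P * snd v) * (snd Q * fst v - fst Q * snd v)"
  define Dn where "Dn = (snd P * fst Q - fst P * snd Q)^2"
  have num: "(mu * snd P * fst v - mu * fst P * snd v) * (nu * snd Q * fst v - nu * fst Q * snd v) = mu*nu*N"
    unfolding N_def by algebra
  have den: "(mu * snd P * (nu * fst Q) - mu * fst P * (nu * snd Q))^2 = (mu*nu)^2 * Dn"
    unfolding Dn_def by algebra
  have "Hform (csc mu P) (csc nu Q) v = mu*nu*N / ((mu*nu)^2 * Dn)"
    unfolding Hform_def csc_def fst_conv snd_conv num den ..
  moreover have "Hform P Q v = N / Dn" unfolding Hform_def N_def Dn_def ..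
  ultimately show ?thesis using assms by (cases "Dn = 0") (auto simp: field_simps power2_eq_square)
qed

lemma scalar_main:
  fixes a b c d :: complex and U V :: "(complex \<times> complex) set"
    and g lam A B :: "complex \<times> complex \<Rightarrow> complex" and f :: "complex \<Rightarrow> complex"
  assumes moeb: "a * d - b * c \<noteq> 0"
    and f_def: "f = moebius a b c d"
    and U_open: "open U"
    and U_dom: "\<forall>z x. (z, x) \<in> U \<longrightarrow> c * z + d \<noteq> 0 \<and> c * x + d \<noteq> 0 \<and> z \<noteq> x"
    and V_open: "open V"
    and UV: "\<forall>z x. (z, x) \<in> U \<longrightarrow> (f z, f x) \<in> V"
    and hg: "holo2 g V"
    and geq: "\<forall>r s. (r,s) \<in> V \<longrightarrow> deriv (\<lambda>t. D1 g (r,t)) s = 1/(2*(r-s)) * (D1 g (r,s) - D2 g (r,s))"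
    and lam_holo: "holo2 lam U"
    and lam_sq: "\<forall>z x. (z, x) \<in> U \<longrightarrow> (lam (z, x))\<^sup>2 = (f z - f x) / (deriv f z * (z - x))"
    and A_def: "A = (\<lambda>p. lam p * deriv (\<lambda>t. g (f t, f (snd p))) (fst p))"
    and B_def: "B = (\<lambda>p. 1 / lam p * deriv (\<lambda>t. g (f (fst p), f t)) (snd p))"
  shows "\<forall>z x. (z,x) \<in> U \<longrightarrow> deriv f z = (a*d-b*c)/(c*z+d)^2 \<and> lam (z,x) \<noteq> 0 \<and>
            A (z,x) = lam (z,x) * ((a*d-b*c)/(c*z+d)^2) * D1 g (f z, f x) \<and>
            B (z,x) = 1 / lam (z,x) * ((a*d-b*c)/(c*x+d)^2) * D2 g (f z, f x)"
    and "\<forall>z x. (z,x) \<in> U \<longrightarrow> ((\<lambda>t. A (z,t)) has_field_derivative 1/(2*(z-x)) * (A (z,x) - B (z,x))) (at x) \<and>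
            ((\<lambda>t. B (t,x)) has_field_derivative 1/(2*(z-x)) * (A (z,x) - B (z,x))) (at z)"
    and "continuous_on U A" "continuous_on U B"
    and "\<forall>z x. (z,x) \<in> U \<longrightarrow> (\<lambda>t. A (t,x)) field_differentiable at z \<and> (\<lambda>t. B (z,t)) field_differentiable at x"
proof -
  define k where "k = a*d-b*c"
  define Df where "Df = (\<lambda>t. k/(c*t+d)^2)"
  have k0: "k \<noteq> 0" using moeb k_def by simp
  have fd: "(f has_field_derivative Df t) (at t)" if "c*t+d \<noteq> 0" for t
    using moeb_deriv[OF that] unfolding f_def Df_def k_def by simp
  have dfe: "deriv f t = Df t" if "c*t+d \<noteq> 0" for t using fd[OF that] by (rule DERIV_imp_deriv)
  have fdiff: "f z - f x = k*(z-x)/((c*z+d)*(c*x+d))" if "c*z+d \<noteq> 0" "c*x+d \<noteq> 0" for z x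
    using moeb_diff[OF that] unfolding f_def k_def by simp
  have lamR: "lam (z,x)^2 = (c*z+d)/(c*x+d)" if "(z,x) \<in> U" for z x
  proof -
    have nz: "c*z+d \<noteq> 0" "c*x+d \<noteq> 0" "z - x \<noteq> 0" using U_dom that by auto
    have gen: "(k*y/(u*w))/(k/u^2*y) = u/w" if "u \<noteq> 0" "w \<noteq> 0" "y \<noteq> 0" for u w y :: complex
      using that k0 by (simp add: field_simps power2_eq_square)
    have "lam (z,x)^2 = (f z - f x) / (deriv f z * (z - x))" using lam_sq that by auto
    also have "\<dots> = (c*z+d)/(c*x+d)" unfolding fdiff[OF nz(1,2)] dfe[OF nz(1)] Df_def
      by (rule gen[OF nz])
    finally show ?thesis .
  qed
  have lnz: "lam (z,x) \<noteq> 0" if "(z,x) \<in> U" for z x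
    using lamR[OF that] U_dom that by auto
  have slice2: "open {t. (z,t) \<in> U}" for z
  proof -
    have "{t. (z,t) \<in> U} = (\<lambda>t. (z,t)) -` U" by auto
    moreover have "continuous_on UNIV (\<lambda>t. (z,t))" by (intro continuous_intros)
    ultimately show ?thesis using open_vimage[OF U_open] by metis
  qed
  have slice1: "open {t. (t,x) \<in> U}" for x
  proof -
    have "{t. (t,x) \<in> U} = (\<lambda>t. (t,x)) -` U" by auto
    moreover have "continuous_on UNIV (\<lambda>t. (t,x))" by (intro continuous_intros)
    ultimately show ?thesis using open_vimage[OF U_open] by metis
  qed
  have L2: "2 * lam (z,x) * D2 lam (z,x) = -c*(c*z+d)/(c*x+d)^2" if zx: "(z,x) \<in> U" for z x
  proof -
    have nx: "c*x+d \<noteq> 0" using U_dom zx by auto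
    have h1: "((\<lambda>t. lam (z,t)^2) has_field_derivative 2 * lam (z,x) * D2 lam (z,x)) (at x)"
      using holo2_partials(2)[OF lam_holo zx] unfolding D2_def
      by (auto intro!: derivative_eq_intros)
    have h2: "((\<lambda>t. (c*z+d)/(c*t+d)) has_field_derivative -c*(c*z+d)/(c*x+d)^2) (at x)"
      using nx by (auto intro!: derivative_eq_intros simp: power2_eq_square field_simps)
    have h3: "((\<lambda>t. lam (z,t)^2) has_field_derivative -c*(c*z+d)/(c*x+d)^2) (at x)"
      by (rule has_field_derivative_transform_within_open[OF h2 slice2[of z]]) (use zx lamR in auto)
    show ?thesis using DERIV_unique[OF h1 h3] .
  qed
  have L1: "2 * lam (z,x) * D1 lam (z,x) = c/(c*x+d)" if zx: "(z,x) \<in> U" for z x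
  proof -
    have nx: "c*x+d \<noteq> 0" using U_dom zx by auto
    have h1: "((\<lambda>t. lam (t,x)^2) has_field_derivative 2 * lam (z,x) * D1 lam (z,x)) (at z)"
      using holo2_partials(1)[OF lam_holo zx] unfolding D1_def
      by (auto intro!: derivative_eq_intros)
    have h0: "((\<lambda>t. c*t+d) has_field_derivative c) (at z)"
      by (auto intro!: derivative_eq_intros)
    have h2: "((\<lambda>t. (c*t+d)/(c*x+d)) has_field_derivative c/(c*x+d)) (at z)"
      by (rule DERIV_cdivide[OF h0])
    have h3: "((\<lambda>t. lam (t,x)^2) has_field_derivative c/(c*x+d)) (at z)"
      by (rule has_field_derivative_transform_within_open[OF h2 slice1[of x]]) (use zx lamR in auto)
    show ?thesis using DERIV_unique[OF h1 h3] .
  qed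
  have ch1: "((\<lambda>t. g (f t, f x)) has_field_derivative D1 g (f z, f x) * Df z) (at z)" if zx: "(z,x) \<in> U" for z x
  proof -
    have "(f z, f x) \<in> V" using UV zx by auto
    from DERIV_chain2[OF holo2_partials(1)[OF hg this] fd] show ?thesis
      using U_dom zx unfolding D1_def by auto
  qed
  have ch2: "((\<lambda>t. g (f z, f t)) has_field_derivative D2 g (f z, f x) * Df x) (at x)" if zx: "(z,x) \<in> U" for z x
  proof -
    have "(f z, f x) \<in> V" using UV zx by auto
    from DERIV_chain2[OF holo2_partials(2)[OF hg this] fd] show ?thesis
      using U_dom zx unfolding D2_def by auto
  qed
  have Aeq: "A (z,x) = lam (z,x) * (D1 g (f z, f x) * Df z)" if zx: "(z,x) \<in> U" for z x
    unfolding A_def using DERIV_imp_deriv[OF ch1[OF zx]] by simp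
  have Beq: "B (z,x) = 1 / lam (z,x) * (D2 g (f z, f x) * Df x)" if zx: "(z,x) \<in> U" for z x
    unfolding B_def using DERIV_imp_deriv[OF ch2[OF zx]] by simp
  show "\<forall>z x. (z,x) \<in> U \<longrightarrow> deriv f z = (a*d-b*c)/(c*z+d)^2 \<and> lam (z,x) \<noteq> 0 \<and>
            A (z,x) = lam (z,x) * ((a*d-b*c)/(c*z+d)^2) * D1 g (f z, f x) \<and>
            B (z,x) = 1 / lam (z,x) * ((a*d-b*c)/(c*x+d)^2) * D2 g (f z, f x)"
    using Aeq Beq dfe lnz U_dom unfolding Df_def k_def by (simp add: mult_ac)
  have dDf: "\<exists>D. (Df has_field_derivative D) (at t)" if "c*t+d \<noteq> 0" for t
    unfolding Df_def using that by (intro exI) (auto intro!: derivative_eq_intros)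
  show "\<forall>z x. (z,x) \<in> U \<longrightarrow> ((\<lambda>t. A (z,t)) has_field_derivative 1/(2*(z-x)) * (A (z,x) - B (z,x))) (at x) \<and>
            ((\<lambda>t. B (t,x)) has_field_derivative 1/(2*(z-x)) * (A (z,x) - B (z,x))) (at z)"
  proof (intro allI impI conjI)
    fix z x assume zx: "(z,x) \<in> U"
    have nz: "c*z+d \<noteq> 0" and nx: "c*x+d \<noteq> 0" and zx': "z - x \<noteq> 0" using U_dom zx by auto
    have V: "(f z, f x) \<in> V" using UV zx by auto
    define P where "P = D1 g (f z, f x)"
    define Q where "Q = D2 g (f z, f x)"
    define M where "M = deriv (\<lambda>t. D1 g (f z, t)) (f x)"
    have Meq: "M = 1/(2*(f z - f x)) * (P - Q)" using geq V unfolding M_def P_def Q_def by auto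
    have uw: "(c*z+d) - (c*x+d) = c*(z-x)" by (simp add: algebra_simps)
    have Dz: "Df z = k/(c*z+d)^2" and Dx: "Df x = k/(c*x+d)^2" unfolding Df_def by simp_all
    have lamd2: "((\<lambda>t. lam (z,t)) has_field_derivative D2 lam (z,x)) (at x)"
      using holo2_partials(2)[OF lam_holo zx] unfolding D2_def by simp
    have lamd1: "((\<lambda>t. lam (t,x)) has_field_derivative D1 lam (z,x)) (at z)"
      using holo2_partials(1)[OF lam_holo zx] unfolding D1_def by simp
    have md: "((\<lambda>t. D1 g (f z, f t)) has_field_derivative M * Df x) (at x)"
      unfolding M_def by (rule DERIV_chain2[OF mixed(1)[OF hg V_open V] fd[OF nx]])
    have md2: "((\<lambda>t. D2 g (f t, f x)) has_field_derivative M * Df z) (at z)"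
      unfolding M_def by (rule DERIV_chain2[OF mixed(2)[OF hg V_open V] fd[OF nz]])
    have E1: "((\<lambda>t. lam (z,t) * (D1 g (f z, f t) * Df z)) has_field_derivative
               D2 lam (z,x) * (P * Df z) + (M * Df x * Df z) * lam (z,x)) (at x)"
      using DERIV_mult[OF lamd2 DERIV_cmult_right[OF md, of "Df z"]] unfolding P_def .
    have val1: "D2 lam (z,x) * (P * Df z) + (M * Df x * Df z) * lam (z,x) = 1/(2*(z-x)) * (A (z,x) - B (z,x))"
      unfolding Aeq[OF zx] Beq[OF zx] P_def[symmetric] Q_def[symmetric]
      using alg1[OF k0 nz nx zx' lnz[OF zx] uw lamR[OF zx] L2[OF zx] Meq fdiff[OF nz nx] Dz Dx]
      by (simp add: mult_ac)
    show "((\<lambda>t. A (z,t)) has_field_derivative 1/(2*(z-x)) * (A (z,x) - B (z,x))) (at x)"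
    proof (rule has_field_derivative_transform_within_open[OF _ slice2[of z]])
      show "((\<lambda>t. lam (z,t) * (D1 g (f z, f t) * Df z)) has_field_derivative 1/(2*(z-x)) * (A (z,x) - B (z,x))) (at x)"
        using E1 val1 by simp
    qed (use zx Aeq in auto)
    have invd: "((\<lambda>t. 1 / lam (t,x)) has_field_derivative (0 * lam (z,x) - 1 * D1 lam (z,x)) / (lam (z,x) * lam (z,x))) (at z)"
      by (rule DERIV_divide[OF DERIV_const lamd1 lnz[OF zx]])
    have E2: "((\<lambda>t. 1 / lam (t,x) * (D2 g (f t, f x) * Df x)) has_field_derivative
               (0 * lam (z,x) - 1 * D1 lam (z,x)) / (lam (z,x) * lam (z,x)) * (Q * Df x) + (M * Df z * Df x) * (1 / lam (z,x))) (at z)"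
      using DERIV_mult[OF invd DERIV_cmult_right[OF md2, of "Df x"]] unfolding Q_def .
    have val2: "(0 * lam (z,x) - 1 * D1 lam (z,x)) / (lam (z,x) * lam (z,x)) * (Q * Df x) + (M * Df z * Df x) * (1 / lam (z,x))
                = 1/(2*(z-x)) * (A (z,x) - B (z,x))"
      unfolding Aeq[OF zx] Beq[OF zx] P_def[symmetric] Q_def[symmetric]
      using alg2[OF k0 nz nx zx' lnz[OF zx] uw lamR[OF zx] L1[OF zx] Meq fdiff[OF nz nx] Dz Dx]
      by (simp add: mult_ac power2_eq_square)
    show "((\<lambda>t. B (t,x)) has_field_derivative 1/(2*(z-x)) * (A (z,x) - B (z,x))) (at z)"
    proof (rule has_field_derivative_transform_within_open[OF _ slice1[of x]])
      show "((\<lambda>t. 1 / lam (t,x) * (D2 g (f t, f x) * Df x)) has_field_derivative 1/(2*(z-x)) * (A (z,x) - B (z,x))) (at z)"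
        using E2 val2 by simp
    qed (use zx Beq in auto)
  qed
  have ffc: "continuous_on U (\<lambda>p. (f (fst p), f (snd p)))"
    unfolding f_def moebius_def using U_dom by (auto intro!: continuous_intros)
  have ffs: "(\<lambda>p. (f (fst p), f (snd p))) ` U \<subseteq> V" using UV by auto
  have lamc: "continuous_on U lam" by (rule holo2_cont[OF lam_holo])
  have Dfc1: "continuous_on U (\<lambda>p. Df (fst p))" unfolding Df_def using U_dom by (auto intro!: continuous_intros)
  have Dfc2: "continuous_on U (\<lambda>p. Df (snd p))" unfolding Df_def using U_dom by (auto intro!: continuous_intros)
  have D1c: "continuous_on U (\<lambda>p. D1 g (f (fst p), f (snd p)))"
    by (rule cont_comp_on[OF D1_cont[OF hg V_open] ffc ffs])
  have D2c: "continuous_on U (\<lambda>p. D2 g (f (fst p), f (snd p)))"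
    by (rule cont_comp_on[OF D2_cont[OF hg V_open] ffc ffs])
  show "continuous_on U A"
  proof (rule continuous_on_eq)
    show "continuous_on U (\<lambda>p. lam p * (D1 g (f (fst p), f (snd p)) * Df (fst p)))"
      by (intro continuous_intros lamc D1c Dfc1)
  qed (auto simp: Aeq)
  show "continuous_on U B"
  proof (rule continuous_on_eq)
    show "continuous_on U (\<lambda>p. 1 / lam p * (D2 g (f (fst p), f (snd p)) * Df (snd p)))"
      using lnz by (intro continuous_intros lamc D2c Dfc2) auto
  qed (auto simp: Beq)
  show "\<forall>z x. (z,x) \<in> U \<longrightarrow> (\<lambda>t. A (t,x)) field_differentiable at z \<and> (\<lambda>t. B (z,t)) field_differentiable at x"
  proof (intro allI impI conjI)
    fix z x assume zx: "(z,x) \<in> U"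
    have nz: "c*z+d \<noteq> 0" and nx: "c*x+d \<noteq> 0" using U_dom zx by auto
    have V: "(f z, f x) \<in> V" using UV zx by auto
    have lamd2: "((\<lambda>t. lam (z,t)) has_field_derivative D2 lam (z,x)) (at x)"
      using holo2_partials(2)[OF lam_holo zx] unfolding D2_def by simp
    have lamd1: "((\<lambda>t. lam (t,x)) has_field_derivative D1 lam (z,x)) (at z)"
      using holo2_partials(1)[OF lam_holo zx] unfolding D1_def by simp
    obtain E1 where E1: "((\<lambda>t. D1 g (t, f x)) has_field_derivative E1) (at (f z))"
      using D1_diff1[OF hg V_open V] unfolding field_differentiable_def by blast
    obtain E2 where E2: "((\<lambda>t. D2 g (f z, t)) has_field_derivative E2) (at (f x))"
      using D2_diff2[OF hg V_open V] unfolding field_differentiable_def by blast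
    obtain F1 where F1: "(Df has_field_derivative F1) (at z)" using dDf[OF nz] by blast
    obtain F2 where F2: "(Df has_field_derivative F2) (at x)" using dDf[OF nx] by blast
    have "(\<lambda>t. lam (t,x) * (D1 g (f t, f x) * Df t)) field_differentiable at z"
      unfolding field_differentiable_def
      using DERIV_mult[OF lamd1 DERIV_mult[OF DERIV_chain2[OF E1 fd[OF nz]] F1]] by blast
    then obtain G1 where G1: "((\<lambda>t. lam (t,x) * (D1 g (f t, f x) * Df t)) has_field_derivative G1) (at z)"
      unfolding field_differentiable_def by blast
    have "((\<lambda>t. A (t,x)) has_field_derivative G1) (at z)"
      by (rule has_field_derivative_transform_within_open[OF G1 slice1[of x]]) (use zx Aeq in auto)
    thus "(\<lambda>t. A (t,x)) field_differentiable at z" unfolding field_differentiable_def by blast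
    have "(\<lambda>t. 1 / lam (z,t) * (D2 g (f z, f t) * Df t)) field_differentiable at x"
      unfolding field_differentiable_def
      using DERIV_mult[OF DERIV_divide[OF DERIV_const lamd2 lnz[OF zx]] DERIV_mult[OF DERIV_chain2[OF E2 fd[OF nx]] F2]] by blast
    then obtain G2 where G2: "((\<lambda>t. 1 / lam (z,t) * (D2 g (f z, f t) * Df t)) has_field_derivative G2) (at x)"
      unfolding field_differentiable_def by blast
    have "((\<lambda>t. B (z,t)) has_field_derivative G2) (at x)"
      by (rule has_field_derivative_transform_within_open[OF G2 slice2[of z]]) (use zx Beq in auto)
    thus "(\<lambda>t. B (z,t)) field_differentiable at x" unfolding field_differentiable_def by blast
  qed
qed

theorem mainTheorem10:
  fixes a b c d :: complex
    and U V :: "(complex \<times> complex) set"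
    and G :: "complex \<times> complex \<Rightarrow> complex \<times> complex"
    and lam :: "complex \<times> complex \<Rightarrow> complex"
    and f :: "complex \<Rightarrow> complex"
    and alpha beta :: "complex \<times> complex \<Rightarrow> complex \<times> complex"
  assumes moeb: "a * d - b * c \<noteq> 0"
    and f_def: "f = moebius a b c d"
    and U_open: "open U"
    and U_dom: "\<forall>z x. (z, x) \<in> U \<longrightarrow> c * z + d \<noteq> 0 \<and> c * x + d \<noteq> 0 \<and> z \<noteq> x"
    and V_open: "open V"
    and V_diag: "\<forall>r s. (r, s) \<in> V \<longrightarrow> r \<noteq> s"
    and UV: "\<forall>z x. (z, x) \<in> U \<longrightarrow> (f z, f x) \<in> V"
    and G_holo: "holoC2 G V"
    and G_eq: "\<forall>r s. (r, s) \<in> V \<longrightarrow>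
                 pd2 (pd1 G) (r, s) = csc (1 / (2 * (r - s))) (pd1 G (r, s) - pd2 G (r, s))"
    and lam_holo: "holo2 lam U"
    and lam_sq: "\<forall>z x. (z, x) \<in> U \<longrightarrow>
                 (lam (z, x))\<^sup>2 = (f z - f x) / (deriv f z * (z - x))"
    and alpha_def: "alpha = (\<lambda>p. csc (lam p) (pd1 (\<lambda>q. G (f (fst q), f (snd q))) p))"
    and beta_def: "beta = (\<lambda>p. csc (1 / lam p) (pd2 (\<lambda>q. G (f (fst q), f (snd q))) p))"
  shows "(\<forall>z x. (z, x) \<in> U \<longrightarrow>
            pd2 alpha (z, x) = csc (1 / (2 * (z - x))) (alpha (z, x) - beta (z, x)) \<and>
            pd1 beta (z, x) = csc (1 / (2 * (z - x))) (alpha (z, x) - beta (z, x)))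
       \<and> (\<forall>p\<in>U. \<exists>W F. open W \<and> p \<in> W \<and> W \<subseteq> U \<and> holoC2 F W \<and>
            (\<forall>z x. (z, x) \<in> W \<longrightarrow>
               pd1 F (z, x) = alpha (z, x) \<and> pd2 F (z, x) = beta (z, x) \<and>
               pd2 (pd1 F) (z, x) = csc (1 / (2 * (z - x))) (pd1 F (z, x) - pd2 F (z, x)) \<and>
               (\<forall>w1 w2 v. (deriv f z * w1) * (deriv f x * w2)
                            + Hform (pd1 G (f z, f x)) (pd2 G (f z, f x)) v
                          = deriv f z * deriv f x * (w1 * w2 + Hform (pd1 F (z, x)) (pd2 F (z, x)) v))))"
proof -
  define g1 where "g1 = (\<lambda>q. fst (G q))"
  define g2 where "g2 = (\<lambda>q. snd (G q))"
  have hg1: "holo2 g1 V" and hg2: "holo2 g2 V" using G_holo unfolding holoC2_def g1_def g2_def by auto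
  define A1 where "A1 = (\<lambda>p. lam p * deriv (\<lambda>t. g1 (f t, f (snd p))) (fst p))"
  define A2 where "A2 = (\<lambda>p. lam p * deriv (\<lambda>t. g2 (f t, f (snd p))) (fst p))"
  define B1 where "B1 = (\<lambda>p. 1 / lam p * deriv (\<lambda>t. g1 (f (fst p), f t)) (snd p))"
  define B2 where "B2 = (\<lambda>p. 1 / lam p * deriv (\<lambda>t. g2 (f (fst p), f t)) (snd p))"
  have alpha_eq: "alpha = (\<lambda>p. (A1 p, A2 p))"
    unfolding alpha_def A1_def A2_def g1_def g2_def csc_def pd1_def by simp
  have beta_eq: "beta = (\<lambda>p. (B1 p, B2 p))"
    unfolding beta_def B1_def B2_def g1_def g2_def csc_def pd2_def by simp
  have pd1G: "pd1 G p = (D1 g1 p, D1 g2 p)" for p unfolding pd1_def D1_def g1_def g2_def by simp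
  have pd2G: "pd2 G p = (D2 g1 p, D2 g2 p)" for p unfolding pd2_def D2_def g1_def g2_def by simp
  have geq1: "\<forall>r s. (r,s) \<in> V \<longrightarrow> deriv (\<lambda>t. D1 g1 (r,t)) s = 1/(2*(r-s)) * (D1 g1 (r,s) - D2 g1 (r,s))"
  proof (intro allI impI)
    fix r s assume "(r,s) \<in> V"
    hence "fst (pd2 (pd1 G) (r, s)) = fst (csc (1 / (2 * (r - s))) (pd1 G (r, s) - pd2 G (r, s)))"
      using G_eq by simp
    thus "deriv (\<lambda>t. D1 g1 (r,t)) s = 1/(2*(r-s)) * (D1 g1 (r,s) - D2 g1 (r,s))"
      unfolding pd2_def csc_def by (simp add: pd1_def D1_def D2_def g1_def g2_def)
  qed
  have geq2: "\<forall>r s. (r,s) \<in> V \<longrightarrow> deriv (\<lambda>t. D1 g2 (r,t)) s = 1/(2*(r-s)) * (D1 g2 (r,s) - D2 g2 (r,s))"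
  proof (intro allI impI)
    fix r s assume "(r,s) \<in> V"
    hence "snd (pd2 (pd1 G) (r, s)) = snd (csc (1 / (2 * (r - s))) (pd1 G (r, s) - pd2 G (r, s)))"
      using G_eq by simp
    thus "deriv (\<lambda>t. D1 g2 (r,t)) s = 1/(2*(r-s)) * (D1 g2 (r,s) - D2 g2 (r,s))"
      unfolding pd2_def csc_def by (simp add: pd1_def D1_def D2_def g1_def g2_def)
  qed
  note S1 = scalar_main[OF moeb f_def U_open U_dom V_open UV hg1 geq1 lam_holo lam_sq A1_def B1_def]
  note S2 = scalar_main[OF moeb f_def U_open U_dom V_open UV hg2 geq2 lam_holo lam_sq A2_def B2_def]
  have part1: "pd2 alpha (z, x) = csc (1 / (2 * (z - x))) (alpha (z, x) - beta (z, x)) \<and>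
            pd1 beta (z, x) = csc (1 / (2 * (z - x))) (alpha (z, x) - beta (z, x))"
    if zx: "(z,x) \<in> U" for z x
  proof -
    have d1: "((\<lambda>t. A1 (z,t)) has_field_derivative 1/(2*(z-x)) * (A1 (z,x) - B1 (z,x))) (at x) \<and>
            ((\<lambda>t. B1 (t,x)) has_field_derivative 1/(2*(z-x)) * (A1 (z,x) - B1 (z,x))) (at z)"
      using S1(2) zx by blast
    have d2: "((\<lambda>t. A2 (z,t)) has_field_derivative 1/(2*(z-x)) * (A2 (z,x) - B2 (z,x))) (at x) \<and>
            ((\<lambda>t. B2 (t,x)) has_field_derivative 1/(2*(z-x)) * (A2 (z,x) - B2 (z,x))) (at z)"
      using S2(2) zx by blast
    have a1: "deriv (\<lambda>t. A1 (z,t)) x = 1/(2*(z-x)) * (A1 (z,x) - B1 (z,x))"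
      using d1 DERIV_imp_deriv by blast
    have a2: "deriv (\<lambda>t. A2 (z,t)) x = 1/(2*(z-x)) * (A2 (z,x) - B2 (z,x))"
      using d2 DERIV_imp_deriv by blast
    have b1: "deriv (\<lambda>t. B1 (t,x)) z = 1/(2*(z-x)) * (A1 (z,x) - B1 (z,x))"
      using d1 DERIV_imp_deriv by blast
    have b2: "deriv (\<lambda>t. B2 (t,x)) z = 1/(2*(z-x)) * (A2 (z,x) - B2 (z,x))"
      using d2 DERIV_imp_deriv by blast
    show ?thesis unfolding alpha_eq beta_eq pd1_def pd2_def csc_def using a1 a2 b1 b2 by simp
  qed
  show ?thesis
  proof (intro conjI allI impI ballI)
    fix z x assume "(z,x) \<in> U"
    thus "pd2 alpha (z, x) = csc (1 / (2 * (z - x))) (alpha (z, x) - beta (z, x))"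
      "pd1 beta (z, x) = csc (1 / (2 * (z - x))) (alpha (z, x) - beta (z, x))" using part1 by auto
  next
    fix p assume pU: "p \<in> U"
    obtain z0 x0 where p0: "p = (z0,x0)" by (cases p)
    obtain e where e: "e > 0" "cball z0 e \<times> cball x0 e \<subseteq> U" using box_nbhd[OF U_open] pU p0 by metis
    define W where "W = ball z0 e \<times> ball x0 e"
    have WU: "W \<subseteq> U" using e unfolding W_def by auto
    have oW: "open W" unfolding W_def by (simp add: open_Times)
    have pW: "p \<in> W" unfolding W_def p0 using e by simp
    have inU: "(z,x) \<in> U" if "z \<in> ball z0 e" "x \<in> ball x0 e" for z x using that WU unfolding W_def by auto
    have x0b: "x0 \<in> ball x0 e" using e by simp
    have cm: "continuous_on (ball z0 e \<times> ball x0 e) (\<lambda>p. 1/(2*(fst p - snd p)) * (Ai p - Bi p))"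
      if "continuous_on U Ai" "continuous_on U Bi" for Ai Bi
    proof -
      have "continuous_on W Ai" "continuous_on W Bi" using that continuous_on_subset WU by blast+
      moreover have "\<forall>q\<in>W. 2*(fst q - snd q) \<noteq> 0" using WU U_dom by auto
      ultimately show ?thesis unfolding W_def[symmetric] by (intro continuous_intros) auto
    qed
    obtain F1 where F1: "\<forall>z\<in>ball z0 e. \<forall>x\<in>ball x0 e. (F1 has_derivative (\<lambda>h. A1 (z,x) * fst h + B1 (z,x) * snd h)) (at (z,x))"
    proof -
      have "\<exists>F. \<forall>z\<in>ball z0 e. \<forall>x\<in>ball x0 e. (F has_derivative (\<lambda>h. A1 (z,x) * fst h + B1 (z,x) * snd h)) (at (z,x))"
      proof (rule prim[OF e(1), where m="\<lambda>z x. 1/(2*(z - x)) * (A1 (z,x) - B1 (z,x))"])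
        show "continuous_on (ball z0 e \<times> ball x0 e) B1" using S1(4) continuous_on_subset WU W_def by blast
        show "continuous_on (ball z0 e \<times> ball x0 e) (\<lambda>p. 1/(2*(fst p - snd p)) * (A1 (fst p, snd p) - B1 (fst p, snd p)))"
          using cm[OF S1(3,4)] by simp
        show "(\<lambda>t. A1 (t,x0)) field_differentiable at z" if "z \<in> ball z0 e" for z
          using S1(5) inU[OF that x0b] by blast
        show "(\<lambda>t. B1 (z,t)) field_differentiable at x" if "z \<in> ball z0 e" "x \<in> ball x0 e" for z x
          using S1(5) inU[OF that] by blast
        show "((\<lambda>t. A1 (z,t)) has_field_derivative 1/(2*(z - x)) * (A1 (z,x) - B1 (z,x))) (at x)"
          if "z \<in> ball z0 e" "x \<in> ball x0 e" for z x
          using S1(2) inU[OF that] by blast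
        show "((\<lambda>t. B1 (t,x)) has_field_derivative 1/(2*(z - x)) * (A1 (z,x) - B1 (z,x))) (at z)"
          if "z \<in> ball z0 e" "x \<in> ball x0 e" for z x
          using S1(2) inU[OF that] by blast
      qed
      thus ?thesis using that by blast
    qed
    obtain F2 where F2: "\<forall>z\<in>ball z0 e. \<forall>x\<in>ball x0 e. (F2 has_derivative (\<lambda>h. A2 (z,x) * fst h + B2 (z,x) * snd h)) (at (z,x))"
    proof -
      have "\<exists>F. \<forall>z\<in>ball z0 e. \<forall>x\<in>ball x0 e. (F has_derivative (\<lambda>h. A2 (z,x) * fst h + B2 (z,x) * snd h)) (at (z,x))"
      proof (rule prim[OF e(1), where m="\<lambda>z x. 1/(2*(z - x)) * (A2 (z,x) - B2 (z,x))"])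
        show "continuous_on (ball z0 e \<times> ball x0 e) B2" using S2(4) continuous_on_subset WU W_def by blast
        show "continuous_on (ball z0 e \<times> ball x0 e) (\<lambda>p. 1/(2*(fst p - snd p)) * (A2 (fst p, snd p) - B2 (fst p, snd p)))"
          using cm[OF S2(3,4)] by simp
        show "(\<lambda>t. A2 (t,x0)) field_differentiable at z" if "z \<in> ball z0 e" for z
          using S2(5) inU[OF that x0b] by blast
        show "(\<lambda>t. B2 (z,t)) field_differentiable at x" if "z \<in> ball z0 e" "x \<in> ball x0 e" for z x
          using S2(5) inU[OF that] by blast
        show "((\<lambda>t. A2 (z,t)) has_field_derivative 1/(2*(z - x)) * (A2 (z,x) - B2 (z,x))) (at x)"
          if "z \<in> ball z0 e" "x \<in> ball x0 e" for z x
          using S2(2) inU[OF that] by blast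
        show "((\<lambda>t. B2 (t,x)) has_field_derivative 1/(2*(z - x)) * (A2 (z,x) - B2 (z,x))) (at z)"
          if "z \<in> ball z0 e" "x \<in> ball x0 e" for z x
          using S2(2) inU[OF that] by blast
      qed
      thus ?thesis using that by blast
    qed
    define F where "F = (\<lambda>q. (F1 q, F2 q))"
    have pdF: "pd1 F (z,x) = alpha (z,x) \<and> pd2 F (z,x) = beta (z,x)" if "(z,x) \<in> W" for z x
    proof -
      have "z \<in> ball z0 e" "x \<in> ball x0 e" using that W_def by auto
      hence d1: "(F1 has_derivative (\<lambda>h. A1 (z,x) * fst h + B1 (z,x) * snd h)) (at (z,x))"
        and d2: "(F2 has_derivative (\<lambda>h. A2 (z,x) * fst h + B2 (z,x) * snd h)) (at (z,x))"
        using F1 F2 by auto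
      show ?thesis unfolding pd1_def pd2_def F_def alpha_eq beta_eq
        using has_derivative_partials_deriv[OF d1] has_derivative_partials_deriv[OF d2] by simp
    qed
    show "\<exists>W F. open W \<and> p \<in> W \<and> W \<subseteq> U \<and> holoC2 F W \<and>
            (\<forall>z x. (z, x) \<in> W \<longrightarrow>
               pd1 F (z, x) = alpha (z, x) \<and> pd2 F (z, x) = beta (z, x) \<and>
               pd2 (pd1 F) (z, x) = csc (1 / (2 * (z - x))) (pd1 F (z, x) - pd2 F (z, x)) \<and>
               (\<forall>w1 w2 v. (deriv f z * w1) * (deriv f x * w2)
                            + Hform (pd1 G (f z, f x)) (pd2 G (f z, f x)) v
                          = deriv f z * deriv f x * (w1 * w2 + Hform (pd1 F (z, x)) (pd2 F (z, x)) v)))"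
    proof (intro exI conjI allI impI)
      show "open W" "p \<in> W" "W \<subseteq> U" by (fact oW pW WU)+
      have h1: "\<exists>A B. (F1 has_derivative (\<lambda>h. A * fst h + B * snd h)) (at q)"
        and h2: "\<exists>A B. (F2 has_derivative (\<lambda>h. A * fst h + B * snd h)) (at q)" if "q \<in> W" for q
      proof -
        obtain z x where q: "q = (z,x)" by (cases q)
        have "z \<in> ball z0 e" "x \<in> ball x0 e" using that q W_def by auto
        thus "\<exists>A B. (F1 has_derivative (\<lambda>h. A * fst h + B * snd h)) (at q)"
             "\<exists>A B. (F2 has_derivative (\<lambda>h. A * fst h + B * snd h)) (at q)"
          using F1 F2 q by blast+
      qed
      show "holoC2 F W" unfolding holoC2_def holo2_def F_def using h1 h2 by simp
      fix z x assume zxW: "(z,x) \<in> W"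
      have zx: "(z,x) \<in> U" using zxW WU by auto
      show "pd1 F (z,x) = alpha (z,x)" "pd2 F (z,x) = beta (z,x)" using pdF[OF zxW] by auto
      have ev: "eventually (\<lambda>t. pd1 F (z,t) = alpha (z,t)) (nhds x)"
      proof -
        have zb: "z \<in> ball z0 e" and xb: "x \<in> ball x0 e" using zxW unfolding W_def by auto
        have "eventually (\<lambda>t. t \<in> ball x0 e) (nhds x)"
          by (rule eventually_nhds_in_open) (use xb in auto)
        thus ?thesis
        proof (rule eventually_mono)
          fix t assume "t \<in> ball x0 e"
          hence "(z,t) \<in> W" using zb unfolding W_def by auto
          thus "pd1 F (z,t) = alpha (z,t)" using pdF by blast
        qed
      qed
      have ev1: "eventually (\<lambda>t. fst (pd1 F (z,t)) = fst (alpha (z,t))) (nhds x)"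
        using ev by (rule eventually_mono) simp
      have ev2: "eventually (\<lambda>t. snd (pd1 F (z,t)) = snd (alpha (z,t))) (nhds x)"
        using ev by (rule eventually_mono) simp
      have e1: "deriv (\<lambda>t. fst (pd1 F (z,t))) x = deriv (\<lambda>t. fst (alpha (z,t))) x"
        by (rule deriv_cong_ev[OF ev1 refl])
      have e2: "deriv (\<lambda>t. snd (pd1 F (z,t))) x = deriv (\<lambda>t. snd (alpha (z,t))) x"
        by (rule deriv_cong_ev[OF ev2 refl])
      have "pd2 (pd1 F) (z,x) = pd2 alpha (z,x)" unfolding pd2_def
        using e1 e2 by simp
      thus "pd2 (pd1 F) (z, x) = csc (1 / (2 * (z - x))) (pd1 F (z, x) - pd2 F (z, x))"
        using part1[OF zx] pdF[OF zxW] by simp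
      fix w1 w2 v
      have info1: "deriv f z = (a*d-b*c)/(c*z+d)^2 \<and> lam (z,x) \<noteq> 0 \<and>
            A1 (z,x) = lam (z,x) * ((a*d-b*c)/(c*z+d)^2) * D1 g1 (f z, f x) \<and>
            B1 (z,x) = 1 / lam (z,x) * ((a*d-b*c)/(c*x+d)^2) * D2 g1 (f z, f x)" using S1(1) zx by blast
      have info2: "A2 (z,x) = lam (z,x) * ((a*d-b*c)/(c*z+d)^2) * D1 g2 (f z, f x) \<and>
            B2 (z,x) = 1 / lam (z,x) * ((a*d-b*c)/(c*x+d)^2) * D2 g2 (f z, f x)" using S2(1) zx by blast
      have zx2: "(x,z) \<in> U \<or> True" by simp
      have dfx: "deriv f x = (a*d-b*c)/(c*x+d)^2"
      proof -
        have nx: "c*x+d \<noteq> 0" using U_dom zx by auto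
        show ?thesis using DERIV_imp_deriv[OF moeb_deriv[OF nx]] f_def by simp
      qed
      define mu where "mu = lam (z,x) * ((a*d-b*c)/(c*z+d)^2)"
      define nu where "nu = 1 / lam (z,x) * ((a*d-b*c)/(c*x+d)^2)"
      have nz: "c*z+d \<noteq> 0" "c*x+d \<noteq> 0" using U_dom zx by auto
      have mu0: "mu \<noteq> 0" unfolding mu_def using info1 nz moeb by simp
      have nu0: "nu \<noteq> 0" unfolding nu_def using info1 nz moeb by simp
      have munu: "mu * nu = deriv f z * deriv f x" unfolding mu_def nu_def using info1 dfx by simp
      have pF1: "pd1 F (z,x) = csc mu (pd1 G (f z, f x))"
        using pdF[OF zxW] info1 info2 unfolding alpha_eq pd1G csc_def mu_def by simp
      have pF2: "pd2 F (z,x) = csc nu (pd2 G (f z, f x))"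
        using pdF[OF zxW] info1 info2 unfolding beta_eq pd2G csc_def nu_def by simp
      show "(deriv f z * w1) * (deriv f x * w2) + Hform (pd1 G (f z, f x)) (pd2 G (f z, f x)) v
              = deriv f z * deriv f x * (w1 * w2 + Hform (pd1 F (z, x)) (pd2 F (z, x)) v)"
      proof -
        have hs: "Hform (pd1 G (f z, f x)) (pd2 G (f z, f x)) v
                  = mu * nu * Hform (csc mu (pd1 G (f z, f x))) (csc nu (pd2 G (f z, f x))) v"
          by (rule Hform_scale[OF mu0 nu0, symmetric])
        show ?thesis unfolding pF1 pF2 hs munu by (simp add: algebra_simps)
      qed
    qed
  qed
qed

end
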